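(* Let $\mathcal{C}$ be a simplicial complex on $[n]$ and $p\ge1$. Then $\mathcal{C}$ is unimodular if and only if $G^p(\mathcal{C})$ is unimodular.
   Context: A simplicial complex on $[n]$ is a family of subsets of $[n]$ closed under subsets; facets are inclusion-maximal faces. $G^p(\mathcal{C})$ denotes the same family of faces as $\mathcal{C}$ but regarded as a complex on ground set $[n+p]$ (so $n+1,\dots,n+p$ lie in no face). $\mathcal{A}_{\mathcal{C}}$ is the $0/1$ matrix with columns indexed by $\mathbf{i}\in\{1,2\}^{\text{ground set}}$ and rows indexed by pairs $(F,\mathbf{e})$, $F$ a facet, $\mathbf{e}\in\{1,2\}^F$; entry $1$ iff $\mathbf{e}=\mathbf{i}|_F$. An integer matrix is unimodular if every circuit (nonzero integer kernel vector with coprime entries and inclusion-minimal support) has entries in $\{0,\pm1\}$; a complex is unimodular if its matrix $\mathcal{A}$ is. *)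

theory Defs
  imports "HOL-Library.FuncSet"
begin

definition supp_vec :: "'c set \<Rightarrow> ('c \<Rightarrow> int) \<Rightarrow> 'c set" where
  "supp_vec Cs v = {c \<in> Cs. v c \<noteq> 0}"

definition in_int_kernel :: "'r set \<Rightarrow> 'c set \<Rightarrow> ('r \<Rightarrow> 'c \<Rightarrow> int) \<Rightarrow> ('c \<Rightarrow> int) \<Rightarrow> bool" where
  "in_int_kernel R Cs A v \<longleftrightarrow>
     (\<forall>c. c \<notin> Cs \<longrightarrow> v c = 0) \<and> (\<forall>r\<in>R. (\<Sum>c\<in>Cs. A r c * v c) = 0)"

definition is_circuit :: "'r set \<Rightarrow> 'c set \<Rightarrow> ('r \<Rightarrow> 'c \<Rightarrow> int) \<Rightarrow> ('c \<Rightarrow> int) \<Rightarrow> bool" where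
  "is_circuit R Cs A v \<longleftrightarrow>
     in_int_kernel R Cs A v \<and> supp_vec Cs v \<noteq> {} \<and> Gcd (v ` Cs) = 1 \<and>
     (\<forall>w. in_int_kernel R Cs A w \<and> supp_vec Cs w \<noteq> {} \<and> supp_vec Cs w \<subseteq> supp_vec Cs v
          \<longrightarrow> supp_vec Cs w = supp_vec Cs v)"

definition unimodular_matrix :: "'r set \<Rightarrow> 'c set \<Rightarrow> ('r \<Rightarrow> 'c \<Rightarrow> int) \<Rightarrow> bool" where
  "unimodular_matrix R Cs A \<longleftrightarrow>
     (\<forall>v. is_circuit R Cs A v \<longrightarrow> (\<forall>c\<in>Cs. v c \<in> {-1, 0, 1}))"

definition simplicial_complex :: "nat \<Rightarrow> nat set set \<Rightarrow> bool" where
  "simplicial_complex n C \<longleftrightarrow> (\<forall>F\<in>C. F \<subseteq> {1..n}) \<and> (\<forall>F\<in>C. \<forall>G. G \<subseteq> F \<longrightarrow> G \<in> C)"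

definition facets :: "nat set set \<Rightarrow> nat set set" where
  "facets C = {F \<in> C. \<forall>G\<in>C. F \<subseteq> G \<longrightarrow> G = F}"

text \<open>Complex C regarded on the ground set [m] = {1..m}.
Columns: i in {1,2}^[m]; rows: (F,e) with F a facet, e in {1,2}^F.\<close>

definition cplx_cols :: "nat \<Rightarrow> (nat \<Rightarrow> nat) set" where
  "cplx_cols m = PiE {1..m} (\<lambda>_. {1,2})"

definition cplx_rows :: "nat set set \<Rightarrow> (nat set \<times> (nat \<Rightarrow> nat)) set" where
  "cplx_rows C = {(F, e). F \<in> facets C \<and> e \<in> PiE F (\<lambda>_. {1,2})}"

definition cplx_matrix :: "nat set \<times> (nat \<Rightarrow> nat) \<Rightarrow> (nat \<Rightarrow> nat) \<Rightarrow> int" where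
  "cplx_matrix r i = (if snd r = restrict i (fst r) then 1 else 0)"

definition unimodular_complex :: "nat \<Rightarrow> nat set set \<Rightarrow> bool" where
  "unimodular_complex m C \<longleftrightarrow> unimodular_matrix (cplx_rows C) (cplx_cols m) cplx_matrix"

text \<open>G^p(C): same faces, ground set [n+p]; represented as (ground size, faces).\<close>
definition G_ext :: "nat \<Rightarrow> nat \<Rightarrow> nat set set \<Rightarrow> nat \<times> nat set set" where
  "G_ext p n C = (n + p, C)"

end

theory Submission
  imports Defs
begin

lemma gcd1_transfer:
  fixes A B :: "int set"
  assumes "Gcd B = 1" "B \<subseteq> insert 0 A"
  shows "Gcd A = 1"
proof (rule Gcd_eqI)
  show "normalize (1::int) = 1" by simp
  show "\<And>b. b \<in> A \<Longrightarrow> 1 dvd b" by simp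
  fix c :: int
  assume h: "\<And>b. b \<in> A \<Longrightarrow> c dvd b"
  have "\<And>b. b \<in> B \<Longrightarrow> c dvd b" using h assms(2) by auto
  hence "c dvd Gcd B" by (rule Gcd_greatest)
  thus "c dvd 1" using assms(1) by simp
qed

lemma sum_lift:
  fixes A :: "'r \<Rightarrow> 'c \<Rightarrow> int" and A' :: "'r \<Rightarrow> 'd \<Rightarrow> int"
  assumes fin: "finite Cs'" and sig: "\<sigma> ` Cs \<subseteq> Cs'" and ps: "\<forall>c\<in>Cs. \<pi> (\<sigma> c) = c"
    and AA: "\<forall>r\<in>R. \<forall>c'\<in>Cs'. A' r c' = A r (\<pi> c')" and r: "r \<in> R"
    and z: "\<forall>c'\<in>Cs'. c' \<notin> \<sigma>`Cs \<longrightarrow> f c' = 0"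
  shows "(\<Sum>c'\<in>Cs'. A' r c' * f c') = (\<Sum>c\<in>Cs. A r c * f (\<sigma> c))"
proof -
  have inj: "inj_on \<sigma> Cs" by (metis inj_onI ps)
  have "(\<Sum>c'\<in>Cs'. A' r c' * f c') = (\<Sum>c'\<in>\<sigma>`Cs. A' r c' * f c')"
    by (rule sum.mono_neutral_right[OF fin sig]) (use z in auto)
  also have "\<dots> = (\<Sum>c\<in>Cs. A' r (\<sigma> c) * f (\<sigma> c))"
    by (simp add: sum.reindex[OF inj])
  also have "\<dots> = (\<Sum>c\<in>Cs. A r c * f (\<sigma> c))"
    by (rule sum.cong) (use AA r sig ps in auto)
  finally show ?thesis .
qed

lemma dir1:
  fixes A :: "'r \<Rightarrow> 'c \<Rightarrow> int" and A' :: "'r \<Rightarrow> 'd \<Rightarrow> int"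
  assumes fin: "finite Cs" "finite Cs'" and pi: "\<pi> ` Cs' \<subseteq> Cs" and sig: "\<sigma> ` Cs \<subseteq> Cs'"
    and ps: "\<forall>c\<in>Cs. \<pi> (\<sigma> c) = c" and AA: "\<forall>r\<in>R. \<forall>c'\<in>Cs'. A' r c' = A r (\<pi> c')"
    and U: "unimodular_matrix R Cs' A'" and circ: "is_circuit R Cs A v" and c: "c \<in> Cs"
  shows "v c \<in> {-1,0,1}"
proof -
  have inj: "inj_on \<sigma> Cs" by (metis inj_onI ps)
  note SL = sum_lift[OF fin(2) sig ps AA]
  from circ have vk: "in_int_kernel R Cs A v" and vs: "supp_vec Cs v \<noteq> {}"
    and vg: "Gcd (v ` Cs) = 1"
    and vm: "\<And>w. in_int_kernel R Cs A w \<Longrightarrow> supp_vec Cs w \<noteq> {} \<Longrightarrow> supp_vec Cs w \<subseteq> supp_vec Cs v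
          \<Longrightarrow> supp_vec Cs w = supp_vec Cs v"
    unfolding is_circuit_def by blast+
  define v' where "v' = (\<lambda>c'. if c' \<in> \<sigma> ` Cs then v (\<pi> c') else 0)"
  have v's: "\<And>c. c\<in>Cs \<Longrightarrow> v' (\<sigma> c) = v c" using ps by (auto simp: v'_def)
  have supp': "supp_vec Cs' v' = \<sigma> ` supp_vec Cs v"
    using sig ps by (auto simp: supp_vec_def v'_def)
  have k': "in_int_kernel R Cs' A' v'"
    unfolding in_int_kernel_def
  proof (intro conjI allI impI ballI)
    fix x assume "x \<notin> Cs'" thus "v' x = 0" using sig by (auto simp: v'_def)
  next
    fix r assume r: "r \<in> R"
    have "(\<Sum>c'\<in>Cs'. A' r c' * v' c') = (\<Sum>c\<in>Cs. A r c * v' (\<sigma> c))"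
      by (rule SL[OF r]) (auto simp: v'_def)
    also have "\<dots> = (\<Sum>c\<in>Cs. A r c * v c)" by (simp add: v's)
    also have "\<dots> = 0" using vk r by (simp add: in_int_kernel_def)
    finally show "(\<Sum>c'\<in>Cs'. A' r c' * v' c') = 0" .
  qed
  have g': "Gcd (v' ` Cs') = 1"
    by (rule gcd1_transfer[OF vg]) (use sig v's in force)
  have m': "supp_vec Cs' w' = supp_vec Cs' v'"
    if wk: "in_int_kernel R Cs' A' w'" and wn: "supp_vec Cs' w' \<noteq> {}"
      and ws: "supp_vec Cs' w' \<subseteq> supp_vec Cs' v'" for w'
  proof -
    define w where "w = (\<lambda>c. if c \<in> Cs then w' (\<sigma> c) else 0)"
    have w0: "\<forall>c'\<in>Cs'. c' \<notin> \<sigma>`Cs \<longrightarrow> w' c' = 0"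
    proof (intro ballI impI)
      fix c' assume "c' \<in> Cs'" "c' \<notin> \<sigma>`Cs"
      hence "c' \<notin> supp_vec Cs' w'" using ws supp' by (auto simp: supp_vec_def)
      thus "w' c' = 0" using \<open>c' \<in> Cs'\<close> by (auto simp: supp_vec_def)
    qed
    have wk2: "in_int_kernel R Cs A w"
      unfolding in_int_kernel_def
    proof (intro conjI allI impI ballI)
      fix x assume "x \<notin> Cs" thus "w x = 0" by (simp add: w_def)
    next
      fix r assume r: "r \<in> R"
      have "(\<Sum>c\<in>Cs. A r c * w c) = (\<Sum>c\<in>Cs. A r c * w' (\<sigma> c))"
        by (simp add: w_def)
      also have "\<dots> = (\<Sum>c'\<in>Cs'. A' r c' * w' c')" by (rule SL[OF r w0, symmetric])
      also have "\<dots> = 0" using wk r by (simp add: in_int_kernel_def)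
      finally show "(\<Sum>c\<in>Cs. A r c * w c) = 0" .
    qed
    have wsub: "supp_vec Cs w \<subseteq> supp_vec Cs v"
    proof
      fix x assume "x \<in> supp_vec Cs w"
      hence x: "x \<in> Cs" "w' (\<sigma> x) \<noteq> 0" by (auto simp: supp_vec_def w_def)
      hence "\<sigma> x \<in> supp_vec Cs' w'" using sig by (auto simp: supp_vec_def)
      hence "\<sigma> x \<in> \<sigma> ` supp_vec Cs v" using ws supp' by auto
      then obtain d where "d \<in> supp_vec Cs v" "\<sigma> x = \<sigma> d" by auto
      moreover hence "d \<in> Cs" by (auto simp: supp_vec_def)
      ultimately show "x \<in> supp_vec Cs v" using inj x(1) by (metis inj_onD)
    qed
    have wne: "supp_vec Cs w \<noteq> {}"
    proof -
      obtain c' where c': "c' \<in> supp_vec Cs' w'" using wn by auto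
      hence "c' \<in> \<sigma> ` supp_vec Cs v" using ws supp' by auto
      then obtain d where d: "d \<in> Cs" "c' = \<sigma> d" by (auto simp: supp_vec_def)
      hence "d \<in> supp_vec Cs w" using c' by (auto simp: supp_vec_def w_def)
      thus ?thesis by auto
    qed
    have eq: "supp_vec Cs w = supp_vec Cs v" by (rule vm[OF wk2 wne wsub])
    show ?thesis
    proof
      show "supp_vec Cs' w' \<subseteq> supp_vec Cs' v'" by (rule ws)
      show "supp_vec Cs' v' \<subseteq> supp_vec Cs' w'"
      proof
        fix x assume "x \<in> supp_vec Cs' v'"
        then obtain d where d: "d \<in> supp_vec Cs v" "x = \<sigma> d" using supp' by auto
        hence "d \<in> supp_vec Cs w" using eq by simp
        thus "x \<in> supp_vec Cs' w'" using d sig by (auto simp: supp_vec_def w_def)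
      qed
    qed
  qed
  have "is_circuit R Cs' A' v'"
    unfolding is_circuit_def using k' g' m' vs supp' by auto
  hence "v' (\<sigma> c) \<in> {-1,0,1}" using U c sig unfolding unimodular_matrix_def by auto
  thus ?thesis using v's c by simp
qed

lemma dir2:
  fixes A :: "'r \<Rightarrow> 'c \<Rightarrow> int" and A' :: "'r \<Rightarrow> 'd \<Rightarrow> int"
  assumes fin: "finite Cs" "finite Cs'" and pi: "\<pi> ` Cs' \<subseteq> Cs"
    and AA: "\<forall>r\<in>R. \<forall>c'\<in>Cs'. A' r c' = A r (\<pi> c')"
    and U: "unimodular_matrix R Cs A" and circ: "is_circuit R Cs' A' v'" and c': "c' \<in> Cs'"
  shows "v' c' \<in> {-1,0,1}"
proof -
  from circ have vk: "in_int_kernel R Cs' A' v'" and vs: "supp_vec Cs' v' \<noteq> {}"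
    and vg: "Gcd (v' ` Cs') = 1"
    and vm: "\<And>w. in_int_kernel R Cs' A' w \<Longrightarrow> supp_vec Cs' w \<noteq> {} \<Longrightarrow> supp_vec Cs' w \<subseteq> supp_vec Cs' v'
          \<Longrightarrow> supp_vec Cs' w = supp_vec Cs' v'"
    unfolding is_circuit_def by blast+
  define S' where "S' = supp_vec Cs' v'"
  have S'C: "S' \<subseteq> Cs'" by (auto simp: S'_def supp_vec_def)
  have v0: "\<And>x. x \<notin> S' \<Longrightarrow> v' x = 0" using vk by (auto simp: S'_def supp_vec_def in_int_kernel_def)
  show ?thesis
  proof (cases "\<exists>a\<in>S'. \<exists>b\<in>S'. a \<noteq> b \<and> \<pi> a = \<pi> b")
    case True
    then obtain a b where ab: "a \<in> S'" "b \<in> S'" "a \<noteq> b" "\<pi> a = \<pi> b" by blast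
    have abC: "a \<in> Cs'" "b \<in> Cs'" using ab S'C by auto
    define w where "w = (\<lambda>x. if x = a then 1 else if x = b then -1 else (0::int))"
    have sw: "supp_vec Cs' w = {a,b}" using abC ab(3) by (auto simp: supp_vec_def w_def)
    have wk: "in_int_kernel R Cs' A' w"
      unfolding in_int_kernel_def
    proof (intro conjI allI impI ballI)
      fix x assume "x \<notin> Cs'" thus "w x = 0" using abC by (auto simp: w_def)
    next
      fix r assume r: "r \<in> R"
      have "(\<Sum>x\<in>Cs'. A' r x * w x) = (\<Sum>x\<in>{a,b}. A' r x * w x)"
        by (rule sum.mono_neutral_right[OF fin(2)]) (use abC in \<open>auto simp: w_def\<close>)
      also have "\<dots> = A' r a - A' r b" using ab(3) by (simp add: w_def)
      also have "\<dots> = 0" using AA r abC ab(4) by simp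
      finally show "(\<Sum>x\<in>Cs'. A' r x * w x) = 0" .
    qed
    have Sab: "S' = {a,b}" using vm[OF wk] sw ab by (auto simp: S'_def)
    show ?thesis
    proof (cases "\<exists>r\<in>R. A r (\<pi> a) \<noteq> 0")
      case True
      then obtain r where r: "r \<in> R" "A r (\<pi> a) \<noteq> 0" by blast
      have "0 = (\<Sum>x\<in>Cs'. A' r x * v' x)" using vk r by (simp add: in_int_kernel_def)
      also have "\<dots> = (\<Sum>x\<in>{a,b}. A' r x * v' x)"
        by (rule sum.mono_neutral_right[OF fin(2)]) (use abC Sab v0 in auto)
      also have "\<dots> = A r (\<pi> a) * (v' a + v' b)" using ab(3,4) AA r abC
        by (simp add: algebra_simps)
      finally have vb: "v' b = - v' a" using r(2) by simp
      have "v' a dvd Gcd (v' ` Cs')"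
      proof (rule Gcd_greatest)
        fix y assume "y \<in> v' ` Cs'"
        then obtain x where "x \<in> Cs'" "y = v' x" by auto
        thus "v' a dvd y" using vb v0 Sab by (cases "x = a \<or> x = b") auto
      qed
      hence "\<bar>v' a\<bar> = 1" using vg by simp
      moreover have "v' c' = v' a \<or> v' c' = v' b \<or> v' c' = 0" using v0[of c'] Sab by (cases "c' = a"; cases "c' = b") auto
      ultimately show ?thesis using vb by (auto simp: abs_if split: if_splits)
    next
      case False
      define u where "u = (\<lambda>x. if x = a then (1::int) else 0)"
      have uk: "in_int_kernel R Cs' A' u"
        unfolding in_int_kernel_def
      proof (intro conjI allI impI ballI)
        fix x assume "x \<notin> Cs'" thus "u x = 0" using abC by (auto simp: u_def)
      next
        fix r assume r: "r \<in> R"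
        have "(\<Sum>x\<in>Cs'. A' r x * u x) = (\<Sum>x\<in>{a}. A' r x * u x)"
          by (rule sum.mono_neutral_right[OF fin(2)]) (use abC in \<open>auto simp: u_def\<close>)
        also have "\<dots> = 0" using AA r abC False by (simp add: u_def)
        finally show "(\<Sum>x\<in>Cs'. A' r x * u x) = 0" .
      qed
      have "supp_vec Cs' u = {a}" using abC by (auto simp: supp_vec_def u_def)
      hence "{a} = {a,b}" using vm[OF uk] Sab by (auto simp: S'_def)
      thus ?thesis using ab(3) by auto
    qed
  next
    case False
    hence inj: "inj_on \<pi> S'" by (auto intro: inj_onI)
    define v where "v = (\<lambda>c. if c \<in> Cs then (\<Sum>x\<in>{x\<in>Cs'. \<pi> x = c}. v' x) else 0)"
    have vpi: "v (\<pi> x) = v' x" if x: "x \<in> S'" for x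
    proof -
      have xC: "x \<in> Cs'" using x S'C by auto
      have "(\<Sum>y\<in>{y\<in>Cs'. \<pi> y = \<pi> x}. v' y) = v' x + (\<Sum>y\<in>{y\<in>Cs'. \<pi> y = \<pi> x} - {x}. v' y)"
        by (rule sum.remove) (use fin xC in auto)
      also have "(\<Sum>y\<in>{y\<in>Cs'. \<pi> y = \<pi> x} - {x}. v' y) = 0"
      proof (rule sum.neutral, rule ballI)
        fix y assume y: "y \<in> {y\<in>Cs'. \<pi> y = \<pi> x} - {x}"
        show "v' y = 0"
        proof (rule ccontr)
          assume "v' y \<noteq> 0"
          hence "y \<in> S'" using y by (auto simp: S'_def supp_vec_def)
          thus False using inj x y by (auto dest: inj_onD)
        qed
      qed
      finally show ?thesis using xC pi by (auto simp: v_def)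
    qed
    have vnz: "\<exists>x\<in>S'. \<pi> x = c" if "c \<in> Cs" "v c \<noteq> 0" for c
    proof -
      have "(\<Sum>x\<in>{x\<in>Cs'. \<pi> x = c}. v' x) \<noteq> 0" using that by (simp add: v_def)
      then obtain x where "x \<in> {x\<in>Cs'. \<pi> x = c}" "v' x \<noteq> 0"
        by (rule sum.not_neutral_contains_not_neutral)
      thus ?thesis by (auto simp: S'_def supp_vec_def)
    qed
    have suppv: "supp_vec Cs v = \<pi> ` S'"
    proof
      show "supp_vec Cs v \<subseteq> \<pi> ` S'" using vnz by (auto simp: supp_vec_def)
      show "\<pi> ` S' \<subseteq> supp_vec Cs v"
      proof
        fix c assume "c \<in> \<pi> ` S'"
        then obtain x where x: "x \<in> S'" "c = \<pi> x" by auto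
        hence "v c = v' x" using vpi by simp
        moreover have "v' x \<noteq> 0" "c \<in> Cs" using x S'C pi by (auto simp: S'_def supp_vec_def)
        ultimately show "c \<in> supp_vec Cs v" by (auto simp: supp_vec_def)
      qed
    qed
    have kv: "in_int_kernel R Cs A v"
      unfolding in_int_kernel_def
    proof (intro conjI allI impI ballI)
      fix x assume "x \<notin> Cs" thus "v x = 0" by (simp add: v_def)
    next
      fix r assume r: "r \<in> R"
      have "(\<Sum>c\<in>Cs. A r c * v c) = (\<Sum>c\<in>Cs. (\<Sum>x\<in>{x\<in>Cs'. \<pi> x = c}. A' r x * v' x))"
      proof (rule sum.cong[OF refl])
        fix c assume "c \<in> Cs"
        hence "A r c * v c = (\<Sum>x\<in>{x\<in>Cs'. \<pi> x = c}. A r c * v' x)"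
          by (simp add: v_def sum_distrib_left)
        also have "\<dots> = (\<Sum>x\<in>{x\<in>Cs'. \<pi> x = c}. A' r x * v' x)"
          by (rule sum.cong) (use AA r in auto)
        finally show "A r c * v c = (\<Sum>x\<in>{x\<in>Cs'. \<pi> x = c}. A' r x * v' x)" .
      qed
      also have "\<dots> = (\<Sum>x\<in>Cs'. A' r x * v' x)"
        by (rule sum.group[OF fin(2) fin(1) pi])
      also have "\<dots> = 0" using vk r by (simp add: in_int_kernel_def)
      finally show "(\<Sum>c\<in>Cs. A r c * v c) = 0" .
    qed
    have gv: "Gcd (v ` Cs) = 1"
    proof (rule gcd1_transfer[OF vg], rule subsetI)
      fix y assume "y \<in> v' ` Cs'"
      then obtain x where x: "x \<in> Cs'" "y = v' x" by auto
      show "y \<in> insert 0 (v ` Cs)"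
      proof (cases "x \<in> S'")
        case True thus ?thesis using x vpi pi by force
      next
        case False thus ?thesis using x v0 by simp
      qed
    qed
    have mv: "supp_vec Cs w = supp_vec Cs v"
      if wk: "in_int_kernel R Cs A w" and wn: "supp_vec Cs w \<noteq> {}"
        and ws: "supp_vec Cs w \<subseteq> supp_vec Cs v" for w
    proof -
      define w' where "w' = (\<lambda>x. if x \<in> S' then w (\<pi> x) else 0)"
      have wk': "in_int_kernel R Cs' A' w'"
        unfolding in_int_kernel_def
      proof (intro conjI allI impI ballI)
        fix x assume "x \<notin> Cs'" thus "w' x = 0" using S'C by (auto simp: w'_def)
      next
        fix r assume r: "r \<in> R"
        have "(\<Sum>x\<in>Cs'. A' r x * w' x) = (\<Sum>x\<in>S'. A' r x * w' x)"
          by (rule sum.mono_neutral_right[OF fin(2) S'C]) (auto simp: w'_def)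
        also have "\<dots> = (\<Sum>x\<in>S'. A r (\<pi> x) * w (\<pi> x))"
          by (rule sum.cong) (use AA r S'C in \<open>auto simp: w'_def\<close>)
        also have "\<dots> = (\<Sum>c\<in>\<pi>`S'. A r c * w c)"
          by (simp add: sum.reindex[OF inj])
        also have "\<dots> = (\<Sum>c\<in>Cs. A r c * w c)"
        proof (rule sum.mono_neutral_left[OF fin(1)])
          show "\<pi> ` S' \<subseteq> Cs" using pi S'C by auto
          show "\<forall>i\<in>Cs - \<pi> ` S'. A r i * w i = 0"
            using ws suppv by (auto simp: supp_vec_def)
        qed
        also have "\<dots> = 0" using wk r by (simp add: in_int_kernel_def)
        finally show "(\<Sum>x\<in>Cs'. A' r x * w' x) = 0" .
      qed
      have sw': "supp_vec Cs' w' \<subseteq> supp_vec Cs' v'"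
        by (auto simp: supp_vec_def w'_def S'_def)
      have nw': "supp_vec Cs' w' \<noteq> {}"
      proof -
        obtain c where c: "c \<in> supp_vec Cs w" using wn by auto
        hence "c \<in> \<pi> ` S'" using ws suppv by auto
        then obtain x where x: "x \<in> S'" "c = \<pi> x" by auto
        hence "x \<in> supp_vec Cs' w'" using c S'C by (auto simp: supp_vec_def w'_def)
        thus ?thesis by auto
      qed
      have eq: "supp_vec Cs' w' = S'" using vm[OF wk' nw' sw'] by (simp add: S'_def)
      show ?thesis
      proof
        show "supp_vec Cs w \<subseteq> supp_vec Cs v" by (rule ws)
        show "supp_vec Cs v \<subseteq> supp_vec Cs w"
        proof
          fix c assume "c \<in> supp_vec Cs v"
          then obtain x where x: "x \<in> S'" "c = \<pi> x" using suppv by auto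
          hence "x \<in> supp_vec Cs' w'" using eq by simp
          hence "w c \<noteq> 0" using x by (auto simp: supp_vec_def w'_def)
          moreover have "c \<in> Cs" using x S'C pi by auto
          ultimately show "c \<in> supp_vec Cs w" by (auto simp: supp_vec_def)
        qed
      qed
    qed
    have "is_circuit R Cs A v"
      unfolding is_circuit_def using kv gv mv suppv vs by (auto simp: S'_def)
    hence U': "\<forall>c\<in>Cs. v c \<in> {-1,0,1}" using U unfolding unimodular_matrix_def by auto
    show ?thesis
    proof (cases "c' \<in> S'")
      case True thus ?thesis using vpi U' pi c' by force
    next
      case False thus ?thesis using v0 by simp
    qed
  qed
qed

lemma proj_unimodular:
  fixes A :: "'r \<Rightarrow> 'c \<Rightarrow> int" and A' :: "'r \<Rightarrow> 'd \<Rightarrow> int"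
  assumes fin: "finite Cs" "finite Cs'" and pi: "\<pi> ` Cs' \<subseteq> Cs" and sig: "\<sigma> ` Cs \<subseteq> Cs'"
    and ps: "\<forall>c\<in>Cs. \<pi> (\<sigma> c) = c" and AA: "\<forall>r\<in>R. \<forall>c'\<in>Cs'. A' r c' = A r (\<pi> c')"
  shows "unimodular_matrix R Cs A \<longleftrightarrow> unimodular_matrix R Cs' A'"
  using dir1[OF fin pi sig ps AA] dir2[OF fin pi AA]
  unfolding unimodular_matrix_def by blast

theorem proposition3p17:
  fixes n p :: nat and C :: "nat set set"
  assumes "simplicial_complex n C" and "p \<ge> 1"
  shows "unimodular_complex n C \<longleftrightarrow> case_prod unimodular_complex (G_ext p n C)"
proof -
  define \<pi> where "\<pi> = (\<lambda>c'::nat\<Rightarrow>nat. restrict c' {1..n})"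
  define \<sigma> where "\<sigma> = (\<lambda>c::nat\<Rightarrow>nat. \<lambda>x. if x \<in> {1..n+p} then (if x \<le> n then c x else 1) else undefined)"
  have fin: "finite (cplx_cols n)" "finite (cplx_cols (n+p))"
    by (auto simp: cplx_cols_def intro!: finite_PiE)
  have pi: "\<pi> ` cplx_cols (n+p) \<subseteq> cplx_cols n"
    by (auto simp: cplx_cols_def \<pi>_def PiE_iff)
  have sig: "\<sigma> ` cplx_cols n \<subseteq> cplx_cols (n+p)"
    by (auto simp: cplx_cols_def \<sigma>_def PiE_iff extensional_def split: if_splits)
  have ps: "\<forall>c\<in>cplx_cols n. \<pi> (\<sigma> c) = c"
  proof
    fix c assume "c \<in> cplx_cols n"
    hence "c \<in> extensional {1..n}" by (auto simp: cplx_cols_def PiE_iff)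
    thus "\<pi> (\<sigma> c) = c" by (auto simp: \<pi>_def \<sigma>_def extensional_def)
  qed
  have AA: "\<forall>r\<in>cplx_rows C. \<forall>c'\<in>cplx_cols (n+p). cplx_matrix r c' = cplx_matrix r (\<pi> c')"
  proof (intro ballI)
    fix r and c' :: "nat \<Rightarrow> nat" assume r: "r \<in> cplx_rows C"
    hence "fst r \<in> C" by (auto simp: cplx_rows_def facets_def)
    hence "fst r \<subseteq> {1..n}" using assms(1) by (auto simp: simplicial_complex_def)
    hence "restrict (restrict c' {1..n}) (fst r) = restrict c' (fst r)"
      by (simp add: restrict_restrict Int_absorb1 inf.absorb2)
    thus "cplx_matrix r c' = cplx_matrix r (\<pi> c')" by (simp add: cplx_matrix_def \<pi>_def)
  qed
  show ?thesis
    unfolding G_ext_def unimodular_complex_def case_prod_conv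
    by (rule proj_unimodular[where A=cplx_matrix and A'=cplx_matrix, OF fin pi sig ps AA])
qed

end
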